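(* Let $Y$ be a finite connected simple undirected graph with vertex set $\{1,\dots,n\}$, and let $\pi\in S_Y$. If $s,s'\in\{0,1,\dots,n-1\}$ with $s\neq s'$, then $[\boldsymbol{\sigma}_s(\pi)]_Y\neq[\boldsymbol{\sigma}_{s'}(\pi)]_Y$. Equivalently, for $g,g'\in C_n$ with $g\neq g'$ one has $[g\cdot\pi]_Y\neq[g'\cdot\pi]_Y$.
   Context: $S_Y$ denotes the set of permutations (total orders) $\pi=(\pi_1,\dots,\pi_n)$ of the vertex set of $Y$. The update graph $U(Y)$ has vertex set $S_Y$, two permutations being adjacent if they differ exactly by swapping two consecutive entries $\pi_k,\pi_{k+1}$ with $\{\pi_k,\pi_{k+1}\}$ not an edge of $Y$; $\pi\sim_Y\pi'$ iff $\pi,\pi'$ lie in the same connected component of $U(Y)$, and $[\pi]_Y$ denotes the class of $\pi$. Let $\sigma=(n,n-1,\dots,2,1)\in S_n$ (cycle notation) and $C_n=\langle\sigma\rangle$, acting on $S_Y$ by $g\cdot(\pi_1,\dots,\pi_n)=(\pi_{g^{-1}(1)},\dots,\pi_{g^{-1}(n)})$. Set $\boldsymbol{\sigma}_s(\pi)=\sigma^s\cdot\pi$; thus $\boldsymbol{\sigma}_1(\pi)=(\pi_2,\dots,\pi_n,\pi_1)$ is the cyclic left shift. *)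

theory Defs
  imports Main
begin

definition simple_graph :: "nat \<Rightarrow> nat set set \<Rightarrow> bool" where
  "simple_graph n E \<longleftrightarrow> (\<forall>e\<in>E. \<exists>u v. e = {u, v} \<and> u \<noteq> v \<and> u \<in> {1..n} \<and> v \<in> {1..n})"

definition graph_connected :: "nat \<Rightarrow> nat set set \<Rightarrow> bool" where
  "graph_connected n E \<longleftrightarrow>
     (\<forall>u\<in>{1..n}. \<forall>v\<in>{1..n}. (u, v) \<in> {(x, y). {x, y} \<in> E}\<^sup>*)"

text \<open>S_Y: permutations (total orders) of the vertex set, as lists
  (pi_1, ..., pi_n) = (xs!0, ..., xs!(n-1)).\<close>
definition perms_Y :: "nat \<Rightarrow> nat list set" where
  "perms_Y n = {xs. distinct xs \<and> set xs = {1..n}}"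

definition swap_adj :: "nat \<Rightarrow> 'a list \<Rightarrow> 'a list" where
  "swap_adj k xs = xs[k := xs ! Suc k, Suc k := xs ! k]"

definition update_edge :: "nat \<Rightarrow> nat set set \<Rightarrow> (nat list \<times> nat list) set" where
  "update_edge n E = {(p, q). p \<in> perms_Y n \<and>
     (\<exists>k. Suc k < n \<and> {p ! k, p ! Suc k} \<notin> E \<and> q = swap_adj k p)}"

definition update_equiv :: "nat \<Rightarrow> nat set set \<Rightarrow> nat list \<Rightarrow> nat list \<Rightarrow> bool" where
  "update_equiv n E p q \<longleftrightarrow> (p, q) \<in> ((update_edge n E) \<union> (update_edge n E)\<inverse>)\<^sup>*"

definition update_class :: "nat \<Rightarrow> nat set set \<Rightarrow> nat list \<Rightarrow> nat list set" where
  "update_class n E p = {q \<in> perms_Y n. update_equiv n E p q}"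

definition sigma_shift :: "nat \<Rightarrow> 'a list \<Rightarrow> 'a list" where
  "sigma_shift s xs = rotate s xs"

end

theory Submission
  imports Defs
begin

fun index :: "'a list \<Rightarrow> 'a \<Rightarrow> nat" where
  "index [] x = 0"
| "index (y#ys) x = (if y = x then 0 else Suc (index ys x))"

lemma index_less_size_conv: "(index xs x < length xs) = (x \<in> set xs)"
  by (induction xs) auto

lemma nth_index: "x \<in> set xs \<Longrightarrow> xs ! index xs x = x"
  by (induction xs) auto

lemma index_notin: "x \<notin> set xs \<Longrightarrow> index xs x = length xs"
  by (induction xs) auto

lemma index_nth_id: "distinct xs \<Longrightarrow> i < length xs \<Longrightarrow> index xs (xs ! i) = i"
proof (induction xs arbitrary: i)
  case Nil then show ?case by simp
next
  case (Cons y ys) then show ?case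
    by (cases i) (auto simp: nth_mem)
qed

definition fE :: "nat set set \<Rightarrow> nat list \<Rightarrow> (nat \<times> nat) set" where
  "fE E q = {(u,v). {u,v} \<in> E \<and> index q u < index q v}"

definition tau :: "nat \<Rightarrow> nat \<Rightarrow> nat" where
  "tau k i = (if i = k then Suc k else if i = Suc k then k else i)"

lemma index_swap:
  assumes "distinct p" "Suc k < length p"
  shows "index (swap_adj k p) x = tau k (index p x)"
proof (cases "x \<in> set p")
  case True
  let ?i = "index p x"
  have i: "?i < length p" "p ! ?i = x" using True by (auto simp: index_less_size_conv nth_index)
  have d: "distinct (swap_adj k p)" using assms
    by (simp add: swap_adj_def distinct_swap)
  have l: "length (swap_adj k p) = length p" by (simp add: swap_adj_def)
  have "swap_adj k p ! tau k ?i = x"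
    using assms i by (auto simp: swap_adj_def tau_def nth_list_update)
  moreover have "tau k ?i < length p" using i assms by (auto simp: tau_def)
  ultimately show ?thesis using d l index_nth_id[OF d, of "tau k ?i"] by simp
next
  case False
  have "set (swap_adj k p) = set p" using assms
    by (simp add: swap_adj_def set_swap)
  then show ?thesis using False assms
    by (simp add: tau_def index_notin, simp add: swap_adj_def)
qed

lemma tau_mono: "\<not> (a = k \<and> b = Suc k) \<and> \<not> (a = Suc k \<and> b = k) \<Longrightarrow> (tau k a < tau k b) = (a < b)"
  unfolding tau_def by auto

lemma swap_pres:
  assumes "distinct p" "Suc k < length p" "{p ! k, p ! Suc k} \<notin> E"
  shows "fE E (swap_adj k p) = fE E p"
proof -
  have key: "((u,v) \<in> fE E (swap_adj k p)) = ((u,v) \<in> fE E p)" for u v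
  proof (cases "{u,v} \<in> E")
    case True
    have ne: "\<not> (index p u = k \<and> index p v = Suc k) \<and> \<not> (index p u = Suc k \<and> index p v = k)"
    proof (intro conjI notI)
      assume h: "index p u = k \<and> index p v = Suc k"
      then have "u = p ! k" "v = p ! Suc k" using assms(2)
        using nth_index[of u p] nth_index[of v p] index_less_size_conv[of p u] index_less_size_conv[of p v] by auto
      thus False using True assms(3) by simp
    next
      assume h: "index p u = Suc k \<and> index p v = k"
      then have "u = p ! Suc k" "v = p ! k" using assms(2)
        using nth_index[of u p] nth_index[of v p] index_less_size_conv[of p u] index_less_size_conv[of p v] by auto
      thus False using True assms(3) by (simp add: insert_commute)
    qed
    have "(tau k (index p u) < tau k (index p v)) = (index p u < index p v)"
      using ne tau_mono by blast
    then show ?thesis using True unfolding fE_def by (simp add: index_swap[OF assms(1,2)])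
  qed (simp add: fE_def)
  show ?thesis
  proof (rule set_eqI)
    fix x :: "nat \<times> nat"
    show "x \<in> fE E (swap_adj k p) \<longleftrightarrow> x \<in> fE E p" using key[of "fst x" "snd x"] by simp
  qed
qed

lemma edge_pres:
  assumes "(p,q) \<in> update_edge n E"
  shows "fE E p = fE E q"
proof -
  obtain k where k: "p \<in> perms_Y n" "Suc k < n" "{p ! k, p ! Suc k} \<notin> E" "q = swap_adj k p"
    using assms unfolding update_edge_def by auto
  have "length p = n" using k(1) distinct_card[of p] unfolding perms_Y_def by simp
  then show ?thesis using swap_pres[of p k E] k unfolding perms_Y_def by auto
qed

lemma equiv_pres:
  assumes "update_equiv n E p q"
  shows "fE E p = fE E q"
  using assms unfolding update_equiv_def
proof (induction rule: rtrancl_induct)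
  case base then show ?case by simp
next
  case (step y z)
  then show ?case using edge_pres by auto
qed

lemma crossing:
  assumes "(x,y) \<in> R\<^sup>*" "x \<in> A" "y \<notin> A"
  shows "\<exists>u v. (u,v) \<in> R \<and> u \<in> A \<and> v \<notin> A"
  using assms by (induction rule: rtrancl_induct) auto

lemma rot_diff:
  assumes G: "simple_graph n E" "graph_connected n E"
    and q: "q \<in> perms_Y n" and t: "0 < t" "t < n"
  shows "fE E (rotate t q) \<noteq> fE E q"
proof -
  have dq: "distinct q" and sq: "set q = {1..n}" using q unfolding perms_Y_def by auto
  have lq: "length q = n" using distinct_card[OF dq] sq by simp
  let ?A = "set (take t q)"
  have a: "q ! 0 \<in> ?A" using t lq nth_mem[of 0 "take t q"] by simp
  have b: "q ! t \<notin> ?A"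
  proof
    assume "q ! t \<in> ?A"
    then obtain m where m: "m < t" "q ! m = q ! t" using t lq
      by (auto simp: in_set_conv_nth)
    then show False using dq t lq nth_eq_iff_index_eq by fastforce
  qed
  have "q ! 0 \<in> set q" "q ! t \<in> set q" using t lq by simp_all
  then have a1: "q ! 0 \<in> {1..n}" "q ! t \<in> {1..n}" using sq by simp_all
  have "(q ! 0, q ! t) \<in> {(x, y). {x, y} \<in> E}\<^sup>*"
    using G(2) a1 unfolding graph_connected_def by simp
  from crossing[OF this a b] obtain u v where uv: "{u,v} \<in> E" "u \<in> ?A" "v \<notin> ?A"
    by auto
  have "v \<in> {1..n}"
  proof -
    obtain a b where eq: "{u,v} = {a,b}" and ab: "a \<in> {1..n}" "b \<in> {1..n}"
      using G(1) uv(1) unfolding simple_graph_def by blast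
    have "v \<in> {a,b}" by (subst eq[symmetric]) simp
    then show ?thesis using ab by auto
  qed
  then have vq: "v \<in> set q" using sq by simp
  have uq: "u \<in> set q" using uv(2) by (meson in_set_takeD)
  define i where "i = index q u"
  define j where "j = index q v"
  have i: "i < t"
  proof -
    obtain m where m: "m < t" "u = q ! m" using uv(2) t lq
      by (auto simp: in_set_conv_nth)
    then have "i = m" unfolding i_def using index_nth_id[OF dq, of m] lq t by simp
    then show ?thesis using m by simp
  qed
  have j2: "j < n" using vq lq index_less_size_conv[of q v] unfolding j_def by simp
  have vj: "q ! j = v" using vq unfolding j_def by (simp add: nth_index)
  have j1: "t \<le> j"
  proof (rule ccontr)
    assume "\<not> t \<le> j"
    then have "q ! j \<in> ?A" using j2 lq by (auto simp: in_set_conv_nth intro!: exI[of _ j])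
    then show False using vj uv(3) by simp
  qed
  note j = j1 j2
  have il: "i < n" using i t by simp
  let ?r = "rotate t q"
  have dr: "distinct ?r" and lr: "length ?r = n" using dq lq by auto
  have "(t + (n - t + i)) mod n = i" using t il by simp
  then have ru: "?r ! (n - t + i) = u"
    using lq t i il nth_rotate[of "n - t + i" q t] by (simp add: i_def uq nth_index)
  have "(t + (j - t)) mod n = j" using j by simp
  then have rv: "?r ! (j - t) = v"
    using lq t j nth_rotate[of "j - t" q t] by (simp add: j_def vq nth_index)
  have "index ?r u = n - t + i" using ru lr i t index_nth_id[OF dr, of "n-t+i"] by simp
  moreover have "index ?r v = j - t" using rv lr j t index_nth_id[OF dr, of "j-t"] by simp
  ultimately have "(u,v) \<in> fE E q" "(u,v) \<notin> fE E ?r"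
    using uv(1) i j unfolding fE_def i_def j_def by auto
  then show ?thesis by auto
qed

lemma rot_perm: "p \<in> perms_Y n \<Longrightarrow> rotate s p \<in> perms_Y n"
  unfolding perms_Y_def by simp

lemma main_lt:
  assumes "simple_graph n E" "graph_connected n E" "p \<in> perms_Y n"
    and "s < s'" "s' < n"
  shows "update_class n E (sigma_shift s p) \<noteq> update_class n E (sigma_shift s' p)"
proof
  assume eq: "update_class n E (sigma_shift s p) = update_class n E (sigma_shift s' p)"
  let ?q = "rotate s p"
  have q: "?q \<in> perms_Y n" using rot_perm assms(3) by blast
  have r: "rotate s' p = rotate (s' - s) ?q" using assms(4) by (simp add: rotate_rotate)
  have "rotate s' p \<in> update_class n E (sigma_shift s' p)"
    using rot_perm[OF assms(3)] unfolding update_class_def update_equiv_def sigma_shift_def by auto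
  then have "update_equiv n E ?q (rotate s' p)"
    using eq unfolding update_class_def sigma_shift_def by auto
  then have "fE E ?q = fE E (rotate (s' - s) ?q)" using equiv_pres r by metis
  moreover have "fE E (rotate (s' - s) ?q) \<noteq> fE E ?q"
    using rot_diff[OF assms(1,2) q] assms(4,5) by simp
  ultimately show False by simp
qed

theorem proposition1:
  fixes n :: nat and E :: "nat set set" and p :: "nat list" and s s' :: nat
  assumes "simple_graph n E"
    and "graph_connected n E"
    and "p \<in> perms_Y n"
    and "s < n" and "s' < n" and "s \<noteq> s'"
  shows "update_class n E (sigma_shift s p) \<noteq> update_class n E (sigma_shift s' p)"
proof (cases "s < s'")
  case True then show ?thesis using main_lt assms by blast
next
  case False then have "s' < s" using assms(6) by simp
  then show ?thesis using main_lt[of n E p s' s] assms by metis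
qed

end
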